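(* On $\mathbb{R}_+$ let $f_0(x)=e^{-x}$ and $f_c(x)=(x-1)^2e^{-x}$. Then $f_0\succ f_c$.
   Context: Majorization on $\mathbb{R}_+$ (Lebesgue measure): $f\succ g$ means $\int_0^\infty f=\int_0^\infty g$ and $\int_0^\infty[f(x)-t]_+dx\ge\int_0^\infty[g(x)-t]_+dx$ for all $t\ge0$, where $[z]_+=\max(z,0)$. *)

theory Defs
  imports "HOL-Analysis.Analysis"
begin

definition majorizes :: "(real \<Rightarrow> real) \<Rightarrow> (real \<Rightarrow> real) \<Rightarrow> bool" where
  "majorizes f g \<longleftrightarrow>
     (\<integral>\<^sup>+ x \<in> {0..}. ennreal (f x) \<partial>lborel) = (\<integral>\<^sup>+ x \<in> {0..}. ennreal (g x) \<partial>lborel) \<and>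
     (\<forall>t::real. t \<ge> 0 \<longrightarrow>
        (\<integral>\<^sup>+ x \<in> {0..}. ennreal (max (f x - t) 0) \<partial>lborel)
          \<ge> (\<integral>\<^sup>+ x \<in> {0..}. ennreal (max (g x - t) 0) \<partial>lborel))"

end

theory Submission
  imports Defs
begin

lemma e_lb: "exp (1::real) \<ge> 2718/1000"
  using e_approx_32 by (simp add: abs_if split: if_split_asm)

lemma e_ub: "exp (1::real) \<le> 272/100"
  using e_less_272 by simp

lemma expn: "exp (real n) = exp 1 ^ n"
  by (simp add: exp_of_nat_mult[symmetric])

lemma exp2_le9: "exp (2::real) \<le> 9"
proof -
  have a: "exp 1 ^ 2 \<le> (272/100::real)^2" by (rule power_mono[OF e_ub]) simp
  have b: "(272/100::real)^2 \<le> 9" by (simp add: eval_nat_numeral)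
  have c: "exp (2::real) = exp 1 ^ 2" using expn[of 2] by simp
  show ?thesis using a b c by linarith
qed

lemma exp3_gt20: "exp (3::real) > 20"
proof -
  have a: "(2718/1000::real)^3 \<le> exp 1 ^ 3" by (rule power_mono[OF e_lb]) simp
  have b: "(2718/1000::real)^3 > 20" by (simp add: eval_nat_numeral)
  have c: "exp (3::real) = exp 1 ^ 3" using expn[of 3] by simp
  show ?thesis using a b c by linarith
qed

lemma exp4_ge54: "exp (4::real) \<ge> 54"
proof -
  have a: "(2718/1000::real)^4 \<le> exp 1 ^ 4" by (rule power_mono[OF e_lb]) simp
  have b: "(2718/1000::real)^4 \<ge> 54" by (simp add: eval_nat_numeral)
  have c: "exp (4::real) = exp 1 ^ 4" using expn[of 4] by simp
  show ?thesis using a b c by linarith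
qed

lemma exp_half_le: "exp (1/2::real) \<le> 5/3"
proof -
  have "exp (1/2::real)^2 = exp 1" by (simp add: exp_of_nat_mult[symmetric])
  moreover have "(272/100::real) \<le> (5/3)^2" by (simp add: eval_nat_numeral)
  ultimately have "exp (1/2::real)^2 \<le> (5/3)^2" using e_ub by linarith
  thus ?thesis by (rule power2_le_imp_le) simp
qed

lemma g_le_4e3: assumes "(1::real) \<le> x" shows "(x-1)^2 * exp (-x) \<le> 4 * exp (-3)"
proof -
  define u where "u = (x-1)/2"
  have u0: "0 \<le> u" using assms by (simp add: u_def)
  have "u \<le> exp (u-1)" using exp_ge_add_one_self[of "u-1"] by simp
  hence "u^2 \<le> exp (u-1)^2" by (rule power_mono) (use u0 in simp)
  also have "exp (u-1)^2 = exp (2*u-2)" by (simp add: exp_of_nat_mult[symmetric] algebra_simps)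
  finally have "u^2 \<le> exp (2*u-2)" .
  hence "4*u^2 * exp(-x) \<le> 4*exp (2*u-2) * exp (-x)" by simp
  also have "4*exp (2*u-2) * exp (-x) = 4 * exp (2*u-2 + -x)"
    by (simp add: mult.assoc exp_add[symmetric])
  also have "2*u-2 + -x = -3" by (simp add: u_def field_simps)
  also have "4*u^2 = (x-1)^2" by (simp add: u_def power2_eq_square)
  finally show ?thesis .
qed

lemma g_le_fifth: assumes "(1/2::real) \<le> x" shows "(x-1)^2 * exp (-x) \<le> 1/5"
proof (cases "x \<le> 1")
  case True
  have "(1-x)^2 \<le> (1/2)^2" by (rule power_mono) (use assms True in auto)
  moreover have "(x-1)^2 = (1-x)^2" by (simp add: power2_commute)
  ultimately have "(x-1)^2 \<le> 1/4" by (simp add: eval_nat_numeral)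
  moreover have "exp (-x) \<le> 2/3"
  proof -
    have "exp (-x) \<le> exp (-(1/2))" using assms by simp
    moreover have "exp (1/2::real) \<ge> 3/2" using exp_ge_add_one_self[of "1/2::real"] by simp
    hence "exp (-(1/2)::real) \<le> 2/3" by (simp add: exp_minus field_simps)
    ultimately show ?thesis by linarith
  qed
  ultimately have "(x-1)^2 * exp (-x) \<le> 1/4 * (2/3)"
    by (intro mult_mono) auto
  thus ?thesis by simp
next
  case False
  have "4 * exp (-3::real) < 1/5" using exp3_gt20 by (simp add: exp_minus field_simps)
  thus ?thesis using g_le_4e3[of x] False by simp
qed

lemma ftc_int:
  fixes F h :: "real \<Rightarrow> real"
  assumes "a \<le> b" "\<And>x. (F has_real_derivative h x) (at x)"
  shows "(h has_integral (F b - F a)) {a..b}"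
  by (rule fundamental_theorem_of_calculus[OF assms(1)])
     (auto simp: has_real_derivative_iff_has_vector_derivative[symmetric]
           intro: has_field_derivative_at_within assms(2))

lemma nn_cont_int:
  fixes u :: "real \<Rightarrow> real"
  assumes "continuous_on {a..b} u" "\<And>x. x \<in> {a..b} \<Longrightarrow> 0 \<le> u x"
  shows "(\<integral>\<^sup>+x\<in>{a..b}. ennreal (u x) \<partial>lborel) = ennreal (integral {a..b} u)"
  by (rule nn_integral_has_integral_lebesgue'[OF assms(2)])
     (auto intro!: integrable_integral integrable_continuous_interval assms(1))

definition G :: "real \<Rightarrow> real" where "G x = -(x^2+1)*exp(-x)"

lemma G_deriv: "(G has_real_derivative (x-1)^2*exp(-x)) (at x)"
  unfolding G_def
  by (rule derivative_eq_intros refl | simp)+ (simp add: power2_eq_square algebra_simps)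

lemma lim_exp_neg: "((\<lambda>x::real. exp(-x)) \<longlongrightarrow> 0) at_top"
proof -
  have "((\<lambda>x::real. x^0 / exp x) \<longlongrightarrow> 0) at_top" by (rule tendsto_power_div_exp_0)
  thus ?thesis by (simp add: exp_minus field_simps)
qed

lemma lim_G: "(G \<longlongrightarrow> 0) at_top"
proof -
  have a: "((\<lambda>x::real. x^2 / exp x) \<longlongrightarrow> 0) at_top" by (rule tendsto_power_div_exp_0)
  have "((\<lambda>x::real. -(x^2 / exp x + exp(-x))) \<longlongrightarrow> -(0+0)) at_top"
    by (intro tendsto_intros a lim_exp_neg)
  moreover have "\<And>x::real. -(x^2 / exp x + exp(-x)) = -(x^2+1)*exp(-x)"
    by (simp add: exp_minus field_simps)
  ultimately show ?thesis by (simp add: G_def[abs_def])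
qed

lemma int_f: "(\<integral>\<^sup>+ x \<in> {0..}. ennreal (exp (- x)) \<partial>lborel) = 1"
proof -
  have "(\<integral>\<^sup>+ x \<in> {0..}. ennreal (exp (- x)) \<partial>lborel) = ennreal (0 - (- exp (- 0)))"
    by (rule nn_integral_FTC_atLeast[where F="\<lambda>x. - exp(-x)"])
       (auto intro!: derivative_eq_intros lim_exp_neg[THEN tendsto_minus, simplified])
  thus ?thesis by simp
qed

lemma int_g: "(\<integral>\<^sup>+ x \<in> {0..}. ennreal ((x-1)^2 * exp (- x)) \<partial>lborel) = 1"
proof -
  have "(\<integral>\<^sup>+ x \<in> {0..}. ennreal ((x-1)^2 * exp (- x)) \<partial>lborel) = ennreal (0 - G 0)"
    by (rule nn_integral_FTC_atLeast[where F=G])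
       (auto intro!: G_deriv lim_G)
  thus ?thesis by (simp add: G_def)
qed

lemma sq_le1: assumes "0 \<le> x" "x \<le> (2::real)" shows "(x-1)^2 \<le> 1"
proof -
  have "\<bar>x-1\<bar> \<le> 1" using assms by auto
  hence "\<bar>x-1\<bar>^2 \<le> 1^2" by (rule power_mono) simp
  thus ?thesis by simp
qed

lemma big_t:
  assumes t: "1/5 \<le> t"
  shows "(\<integral>\<^sup>+x\<in>{0..}. ennreal (max ((x-1)^2*exp(-x) - t) 0) \<partial>lborel)
       \<le> (\<integral>\<^sup>+x\<in>{0..}. ennreal (max (exp(-x) - t) 0) \<partial>lborel)"
proof (rule nn_integral_mono)
  fix x :: real
  have "max ((x-1)^2*exp(-x) - t) 0 \<le> max (exp(-x) - t) 0" if "0 \<le> x"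
  proof (cases "x \<le> 1")
    case True
    have h: "(x-1)^2*exp(-x) \<le> 1 * exp(-x)" using sq_le1[of x] True that
      by (intro mult_right_mono) auto
    show ?thesis using h by (smt (verit))
  next
    case False
    thus ?thesis using g_le_fifth[of x] t by simp
  qed
  thus "ennreal (max ((x-1)^2*exp(-x) - t) 0) * indicator {0..} x
        \<le> ennreal (max (exp(-x) - t) 0) * indicator {0..} x"
    by (auto split: split_indicator intro: ennreal_leI)
qed

lemma g_int: "a \<le> b \<Longrightarrow> ((\<lambda>x. (x-1)^2*exp(-x)) has_integral (G b - G a)) {a..b}"
  by (rule ftc_int) (auto intro: G_deriv)

lemma aux_max: fixes t y :: real
  assumes "0 \<le> t" "t \<le> 1/5" "0 \<le> y" "y \<le> 1/5"
  shows "max (y - t) 0 \<le> (1 - 5*t) * y"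
proof -
  have a: "t*(5*y) \<le> t*1" using assms by (intro mult_left_mono) auto
  have b: "0 \<le> (1-5*t)*y" using assms by (intro mult_nonneg_nonneg) auto
  show ?thesis using a b by (simp add: algebra_simps)
qed

lemma small_t:
  assumes t0: "0 \<le> t" and t1: "t < 1/5"
  shows "(\<integral>\<^sup>+x\<in>{0..}. ennreal (max ((x-1)^2*exp(-x) - t) 0) \<partial>lborel)
       \<le> (\<integral>\<^sup>+x\<in>{0..}. ennreal (max (exp(-x) - t) 0) \<partial>lborel)"
proof -
  let ?g = "\<lambda>x::real. (x-1)^2*exp(-x)"
  let ?P = "\<lambda>x::real. max ((x-1)^2*exp(-x) - t) 0"
  let ?Q = "\<lambda>x::real. max (exp(-x) - t) 0"
  have L: "(\<integral>\<^sup>+x\<in>{0..}. ennreal (?P x) \<partial>lborel)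
      = (\<integral>\<^sup>+x\<in>{0..4}. ennreal (?P x) \<partial>lborel) + (\<integral>\<^sup>+x\<in>{4<..}. ennreal (?P x) \<partial>lborel)"
  proof -
    have "{0::real..} = {0..4} \<union> {4<..}" by auto
    thus ?thesis by (simp only:) (rule nn_integral_disjoint_pair, auto)
  qed
  have R: "(\<integral>\<^sup>+x\<in>{0..}. ennreal (?Q x) \<partial>lborel)
      = (\<integral>\<^sup>+x\<in>{0..2}. ennreal (?Q x) \<partial>lborel) + (\<integral>\<^sup>+x\<in>{2<..}. ennreal (?Q x) \<partial>lborel)"
  proof -
    have "{0::real..} = {0..2} \<union> {2<..}" by auto
    thus ?thesis by (simp only:) (rule nn_integral_disjoint_pair, auto)
  qed
  have L1: "(\<integral>\<^sup>+x\<in>{0..4}. ennreal (?P x) \<partial>lborel) = ennreal (integral {0..4} ?P)"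
    by (rule nn_cont_int) (auto intro!: continuous_intros)
  have R1: "(\<integral>\<^sup>+x\<in>{0..2}. ennreal (?Q x) \<partial>lborel) = ennreal (integral {0..2} ?Q)"
    by (rule nn_cont_int) (auto intro!: continuous_intros)
  have intP: "?P integrable_on {a..b}" for a b
    by (rule integrable_continuous_interval) (auto intro!: continuous_intros)
  have i1: "integral {0..4} ?P = integral {0..1/2} ?P + integral {1/2..4} ?P"
    using Henstock_Kurzweil_Integration.integral_combine[where a=0 and c="1/2::real" and b=4 and f="?P"] intP by simp
  have i2: "integral {0..1/2} ?P \<le> G (1/2) - G 0"
  proof (rule has_integral_le[OF integrable_integral[OF intP] g_int])
    fix x :: real
    show "?P x \<le> ?g x" using t0 by simp
  qed simp
  have i3: "integral {1/2..4} ?P \<le> (1-5*t) * (G 4 - G (1/2))"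
  proof (rule has_integral_le[OF integrable_integral[OF intP] has_integral_mult_right[OF g_int]])
    fix x :: real assume x: "x \<in> {1/2..4}"
    have gl: "?g x \<le> 1/5" using g_le_fifth[of x] x by simp
    have g0: "0 \<le> ?g x" by simp
    show "?P x \<le> (1-5*t) * ?g x" using aux_max[OF t0 _ g0 gl] t1 by simp
  qed simp
  have hF: "((\<lambda>x. exp(-x) - t) has_integral ((-exp(-2) - t*2) - (-exp(-0) - t*0))) {0..2}"
  proof (rule ftc_int[where F="\<lambda>x. -exp(-x) - t*x"])
    show "((\<lambda>x. - exp (- x) - t * x) has_real_derivative exp(-x) - t) (at x)" for x
      by (rule derivative_eq_intros refl | simp)+
  qed simp
  have intQ: "?Q integrable_on {0..2}"
    by (rule integrable_continuous_interval) (auto intro!: continuous_intros)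
  have i4: "(-exp(-2) - t*2) - (-exp(-0) - t*0) \<le> integral {0..2} ?Q"
    by (rule has_integral_le[OF hF integrable_integral[OF intQ]]) simp
  have pw: "ennreal (?P x) \<le> ennreal (max (exp(2-x) - t) 0) + ennreal (?g x - exp 2 * exp(-x))"
    if x: "4 < x" for x
  proof -
    have c: "exp (2-x) = exp 2 * exp (-x)" by (simp add: exp_diff exp_minus field_simps)
    have "exp 2 \<le> (x-1)^2"
    proof -
      have "3^2 \<le> (x-1)^2" by (rule power_mono) (use x in auto)
      thus ?thesis using exp2_le9 by simp
    qed
    hence cg: "exp 2 * exp(-x) \<le> ?g x" by (intro mult_right_mono) auto
    have "?P x \<le> max (exp(2-x) - t) 0 + (?g x - exp 2 * exp(-x))"
      using c cg by (smt (verit))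
    thus ?thesis using cg by (simp add: ennreal_plus[symmetric] del: ennreal_plus)
  qed
  have T1: "(\<integral>\<^sup>+x\<in>{4<..}. ennreal (?P x) \<partial>lborel)
     \<le> (\<integral>\<^sup>+x\<in>{4<..}. ennreal (max (exp(2-x) - t) 0) \<partial>lborel)
       + (\<integral>\<^sup>+x\<in>{4<..}. ennreal (?g x - exp 2 * exp(-x)) \<partial>lborel)"
  proof -
    have "(\<integral>\<^sup>+x\<in>{4<..}. ennreal (?P x) \<partial>lborel)
      \<le> (\<integral>\<^sup>+x. ennreal (max (exp(2-x) - t) 0) * indicator {4<..} x
            + ennreal (?g x - exp 2 * exp(-x)) * indicator {4<..} x \<partial>lborel)"
      by (rule nn_integral_mono) (auto split: split_indicator intro: pw)
    also have "\<dots> = (\<integral>\<^sup>+x\<in>{4<..}. ennreal (max (exp(2-x) - t) 0) \<partial>lborel)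
       + (\<integral>\<^sup>+x\<in>{4<..}. ennreal (?g x - exp 2 * exp(-x)) \<partial>lborel)"
      by (rule nn_integral_add) auto
    finally show ?thesis .
  qed
  have T2: "(\<integral>\<^sup>+x\<in>{4<..}. ennreal (max (exp(2-x) - t) 0) \<partial>lborel)
      = (\<integral>\<^sup>+x\<in>{2<..}. ennreal (?Q x) \<partial>lborel)"
  proof -
    have "(\<integral>\<^sup>+x\<in>{4<..}. ennreal (max (exp(2-x) - t) 0) \<partial>lborel)
       = ennreal \<bar>1::real\<bar> * (\<integral>\<^sup>+x. ennreal (max (exp(2-(2 + 1 * x)) - t) 0) * indicator {4<..} (2 + 1 * x) \<partial>lborel)"
      by (rule nn_integral_real_affine) auto
    also have "\<dots> = (\<integral>\<^sup>+x\<in>{2<..}. ennreal (?Q x) \<partial>lborel)"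
      by (auto intro!: nn_integral_cong split: split_indicator)
    finally show ?thesis .
  qed
  define K where "K = - (G 4 + exp 2 * exp (-4))"
  have T3: "(\<integral>\<^sup>+x\<in>{4<..}. ennreal (?g x - exp 2 * exp(-x)) \<partial>lborel) \<le> ennreal K"
  proof -
    have "(\<integral>\<^sup>+x\<in>{4<..}. ennreal (?g x - exp 2 * exp(-x)) \<partial>lborel)
        \<le> (\<integral>\<^sup>+x\<in>{4..}. ennreal (?g x - exp 2 * exp(-x)) \<partial>lborel)"
      by (rule nn_integral_mono) (auto split: split_indicator)
    also have "\<dots> = ennreal (0 - (G 4 + exp 2 * exp (-4)))"
    proof (rule nn_integral_FTC_atLeast[where F="\<lambda>x. G x + exp 2 * exp (-x)"])
      show "((\<lambda>x. G x + exp 2 * exp (-x)) \<longlongrightarrow> 0) at_top"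
        using tendsto_add[OF lim_G tendsto_mult_left[OF lim_exp_neg, of "exp 2"]] by simp
      fix x :: real assume x: "4 \<le> x"
      show "((\<lambda>x. G x + exp 2 * exp (-x)) has_real_derivative ?g x - exp 2 * exp(-x)) (at x)"
        by (rule derivative_eq_intros G_deriv refl | simp)+
      have "exp 2 \<le> (x-1)^2"
      proof -
        have "3^2 \<le> (x-1)^2" by (rule power_mono) (use x in auto)
        thus ?thesis using exp2_le9 by simp
      qed
      hence "exp 2 * exp(-x) \<le> ?g x" by (intro mult_right_mono) auto
      thus "0 \<le> ?g x - exp 2 * exp(-x)" by simp
    qed auto
    finally show ?thesis by (simp add: K_def)
  qed
  have e4: "exp (-4::real) \<le> 1/54" using exp4_ge54 by (simp add: exp_minus field_simps)
  have eh: "exp (-(1/2)::real) \<ge> 3/5" using exp_half_le by (simp add: exp_minus field_simps)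
  have e24: "exp 2 * exp (-4::real) = exp (-2)" by (simp add: exp_add[symmetric])
  have Aeq: "G 4 - G (1/2) = 5/4 * exp(-(1/2)) - 17*exp(-4)"
    by (simp add: G_def power2_eq_square)
  have A: "G 4 - G (1/2) \<ge> 2/5"
    using e4 eh Aeq by linarith
  have tA: "t * 2 \<le> 5 * t * (G 4 - G (1/2))"
    using mult_left_mono[OF A t0] by simp
  have G0: "G 0 = -1" by (simp add: G_def)
  have G4: "G 4 = -17 * exp (-4)" by (simp add: G_def)
  have e4p: "0 < exp (-4::real)" by simp
  have e29: "exp 2 * exp(-4) \<le> 9 * exp (-4::real)" by (rule mult_right_mono[OF exp2_le9]) simp
  have K0: "0 \<le> K" unfolding K_def using G4 e29 e4p by linarith
  have P0: "0 \<le> integral {0..4} ?P"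
    by (rule integral_nonneg[OF intP]) simp
  have i4': "1 - exp(-2) - 2*t \<le> integral {0..2} ?Q" using i4 by simp
  have dist: "(1-5*t)*(G 4 - G(1/2)) = (G 4 - G(1/2)) - 5*t*(G 4 - G(1/2))"
    by (simp add: algebra_simps)
  have Keq: "K = - G 4 - exp(-2)" unfolding K_def using e24 by linarith
  have real_ineq: "integral {0..4} ?P + K \<le> integral {0..2} ?Q"
    using i1 i2 i3 i4' tA G0 Keq dist by linarith
  have "(\<integral>\<^sup>+x\<in>{0..}. ennreal (?P x) \<partial>lborel)
      \<le> ennreal (integral {0..4} ?P) + ((\<integral>\<^sup>+x\<in>{2<..}. ennreal (?Q x) \<partial>lborel) + ennreal K)"
  proof -
    have S1: "(\<integral>\<^sup>+x\<in>{4<..}. ennreal (?P x) \<partial>lborel)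
        \<le> (\<integral>\<^sup>+x\<in>{2<..}. ennreal (?Q x) \<partial>lborel) + ennreal K"
      using T1 unfolding T2 using add_left_mono[OF T3] by (rule order_trans)
    show ?thesis unfolding L L1 by (rule add_left_mono[OF S1])
  qed
  also have "\<dots> = ennreal (integral {0..4} ?P + K) + (\<integral>\<^sup>+x\<in>{2<..}. ennreal (?Q x) \<partial>lborel)"
    using P0 K0 by (simp add: ennreal_plus[symmetric] del: ennreal_plus add_ac)
  also have "\<dots> \<le> ennreal (integral {0..2} ?Q) + (\<integral>\<^sup>+x\<in>{2<..}. ennreal (?Q x) \<partial>lborel)"
    using real_ineq by (intro add_right_mono ennreal_leI)
  also have "\<dots> = (\<integral>\<^sup>+x\<in>{0..}. ennreal (?Q x) \<partial>lborel)"
    unfolding R R1 ..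
  finally show ?thesis .
qed

theorem mainTheorem8:
  shows "majorizes (\<lambda>x. exp (- x)) (\<lambda>x. (x - 1)^2 * exp (- x))"
  unfolding majorizes_def
proof (intro conjI allI impI)
  show "(\<integral>\<^sup>+ x \<in> {0..}. ennreal (exp (- x)) \<partial>lborel) =
        (\<integral>\<^sup>+ x \<in> {0..}. ennreal ((x - 1)^2 * exp (- x)) \<partial>lborel)"
    using int_f int_g by simp
next
  fix t :: real assume t: "0 \<le> t"
  show "(\<integral>\<^sup>+ x \<in> {0..}. ennreal (max ((x - 1)^2 * exp (- x) - t) 0) \<partial>lborel)
        \<le> (\<integral>\<^sup>+ x \<in> {0..}. ennreal (max (exp (- x) - t) 0) \<partial>lborel)"
  proof (cases "t < 1/5")
    case True thus ?thesis using small_t[OF t] by simp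
  next
    case False thus ?thesis using big_t by simp
  qed
qed

end
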